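(* Every WD-algebra $\mathbf A$ is isomorphic to a subalgebra of $\mathcal A(\mathcal F(\mathbf A))$; more precisely, the map $\sigma_{\mathbf A}(a)=\{P\in X(\mathbf A)\colon a\in P\}$ is an injective homomorphism from $\mathbf A$ into $\mathcal A(\mathcal F(\mathbf A))$.
   Context: A WD-algebra is an algebra $(A,\wedge,\vee,\leftarrow,0,1)$ such that $(A,\wedge,\vee,0,1)$ is a bounded distributive lattice and for all $a,b,c\in A$: $a\leftarrow a=0$; $(a\vee b)\leftarrow c=(a\leftarrow c)\vee(b\leftarrow c)$; $a\leftarrow(b\wedge c)=(a\leftarrow b)\vee(a\leftarrow c)$; $a\leftarrow c\le(a\leftarrow b)\vee(b\leftarrow c)$. $X(\mathbf A)$ is the set of prime filters of $\mathbf A$; $S_{\mathbf A}$ is the relation on $X(\mathbf A)$ with $(P,Q)\in S_{\mathbf A}$ iff for all $a,b\in A$, $a\in Q$ and $b\notin Q$ imply $a\leftarrow b\in P$. $\mathcal F(\mathbf A)=(X(\mathbf A),\subseteq,S_{\mathbf A})$. For a structure $\mathcal F=(X,\le,S)$, $\mathcal A(\mathcal F)=(\mathrm{Up}(X),\cap,\cup,\Leftarrow_S,\emptyset,X)$, where $\mathrm{Up}(X)$ is the set of upsets of $(X,\le)$ and $U\Leftarrow_S V=\{x\in X\colon S(x)\cap(U\setminus V)\neq\emptyset\}$ with $S(x)=\{y\colon(x,y)\in S\}$. *)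

theory Defs
  imports Main
begin

text \<open>A WD-algebra: the bounded distributive lattice is the type class structure
  (inf, sup, bot = 0, top = 1) on type 'a, and imp a b stands for a \<leftarrow> b.\<close>
definition wd_algebra :: "('a::{distrib_lattice,bounded_lattice} \<Rightarrow> 'a \<Rightarrow> 'a) \<Rightarrow> bool" where
  "wd_algebra imp \<longleftrightarrow>
     (\<forall>a. imp a a = bot) \<and>
     (\<forall>a b c. imp (sup a b) c = sup (imp a c) (imp b c)) \<and>
     (\<forall>a b c. imp a (inf b c) = sup (imp a b) (imp a c)) \<and>
     (\<forall>a b c. imp a c \<le> sup (imp a b) (imp b c))"

definition prime_filter :: "'a::{distrib_lattice,bounded_lattice} set \<Rightarrow> bool" where
  "prime_filter P \<longleftrightarrow>
     top \<in> P \<and> bot \<notin> P \<and>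
     (\<forall>a b. a \<in> P \<and> a \<le> b \<longrightarrow> b \<in> P) \<and>
     (\<forall>a b. a \<in> P \<and> b \<in> P \<longrightarrow> inf a b \<in> P) \<and>
     (\<forall>a b. sup a b \<in> P \<longrightarrow> a \<in> P \<or> b \<in> P)"

definition prime_filters :: "'a::{distrib_lattice,bounded_lattice} set set" where
  "prime_filters = {P. prime_filter P}"

definition S_rel :: "('a::{distrib_lattice,bounded_lattice} \<Rightarrow> 'a \<Rightarrow> 'a) \<Rightarrow> ('a set \<times> 'a set) set" where
  "S_rel imp = {(P, Q). P \<in> prime_filters \<and> Q \<in> prime_filters \<and>
                 (\<forall>a b. a \<in> Q \<and> b \<notin> Q \<longrightarrow> imp a b \<in> P)}"

definition upsets :: "'x set \<Rightarrow> ('x \<Rightarrow> 'x \<Rightarrow> bool) \<Rightarrow> 'x set set" where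
  "upsets X le = {U. U \<subseteq> X \<and> (\<forall>x\<in>U. \<forall>y\<in>X. le x y \<longrightarrow> y \<in> U)}"

definition larrow_S :: "'x set \<Rightarrow> ('x \<times> 'x) set \<Rightarrow> 'x set \<Rightarrow> 'x set \<Rightarrow> 'x set" where
  "larrow_S X S U V = {x \<in> X. {y. (x, y) \<in> S} \<inter> (U - V) \<noteq> {}}"

definition sigma :: "'a::{distrib_lattice,bounded_lattice} \<Rightarrow> 'a set set" where
  "sigma a = {P \<in> prime_filters. a \<in> P}"

text \<open>h is a homomorphism from (A, inf, sup, imp, bot, top) into
  A(F(A)) = (Up(X(A)), \<inter>, \<union>, \<Leftarrow>_{S_A}, {}, X(A)).\<close>
definition hom_into_complex_algebra ::
  "('a::{distrib_lattice,bounded_lattice} \<Rightarrow> 'a \<Rightarrow> 'a) \<Rightarrow> ('a \<Rightarrow> 'a set set) \<Rightarrow> bool" where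
  "hom_into_complex_algebra imp h \<longleftrightarrow>
     (\<forall>a. h a \<in> upsets prime_filters (\<subseteq>)) \<and>
     (\<forall>a b. h (inf a b) = h a \<inter> h b) \<and>
     (\<forall>a b. h (sup a b) = h a \<union> h b) \<and>
     (\<forall>a b. h (imp a b) = larrow_S prime_filters (S_rel imp) (h a) (h b)) \<and>
     h bot = {} \<and> h top = prime_filters"

end

theory Submission
  imports Defs
begin

definition good :: "('a::{distrib_lattice,bounded_lattice} \<Rightarrow> 'a \<Rightarrow> bool) \<Rightarrow> 'a \<Rightarrow> 'a \<Rightarrow> 'a set \<Rightarrow> bool" where
  "good T a b F \<longleftrightarrow> (\<forall>x\<in>F. \<forall>y. x \<le> y \<longrightarrow> y \<in> F) \<and> (\<forall>x\<in>F. \<forall>y\<in>F. inf x y \<in> F)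
     \<and> a \<in> F \<and> b \<notin> F \<and> (\<forall>c\<in>F. \<forall>d. T c d \<longrightarrow> d \<in> F)"

lemma sep:
  fixes T :: "'a::{distrib_lattice,bounded_lattice} \<Rightarrow> 'a \<Rightarrow> bool"
  assumes T1: "\<And>c. T c c"
    and T2: "\<And>c d d'. T c d \<Longrightarrow> d \<le> d' \<Longrightarrow> T c d'"
    and T3: "\<And>c d1 d2. T c d1 \<Longrightarrow> T c d2 \<Longrightarrow> T c (inf d1 d2)"
    and T4: "\<And>c c' d. c' \<le> c \<Longrightarrow> T c d \<Longrightarrow> T c' d"
    and T5: "\<And>c d e. T c d \<Longrightarrow> T d e \<Longrightarrow> T c e"
    and T6: "\<And>c1 c2 d. T c1 d \<Longrightarrow> T c2 d \<Longrightarrow> T (sup c1 c2) d"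
    and nab: "\<not> T a b"
  shows "\<exists>Q. prime_filter Q \<and> a \<in> Q \<and> b \<notin> Q \<and> (\<forall>c\<in>Q. \<forall>d. T c d \<longrightarrow> d \<in> Q)"
proof -
  let ?A = "{F. good T a b F}"
  have F0a: "\<forall>x\<in>{d. T a d}. \<forall>y. x \<le> y \<longrightarrow> y \<in> {d. T a d}" using T2 by blast
  have F0b: "\<forall>x\<in>{d. T a d}. \<forall>y\<in>{d. T a d}. inf x y \<in> {d. T a d}" using T3 by blast
  have F0c: "\<forall>c\<in>{d. T a d}. \<forall>d. T c d \<longrightarrow> d \<in> {d. T a d}" using T5 by blast
  have "good T a b {d. T a d}"
    unfolding good_def using F0a F0b F0c T1[of a] nab by blast
  then have F0: "{d. T a d} \<in> ?A" by simp
  have "\<forall>C\<in>chains ?A. \<exists>U\<in>?A. \<forall>X\<in>C. X \<subseteq> U"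
  proof
    fix C assume C: "C \<in> chains ?A"
    show "\<exists>U\<in>?A. \<forall>X\<in>C. X \<subseteq> U"
    proof (cases "C = {}")
      case True then show ?thesis using F0 by blast
    next
      case False
      have sub: "C \<subseteq> ?A" and ch: "\<forall>X\<in>C. \<forall>Y\<in>C. X \<subseteq> Y \<or> Y \<subseteq> X"
        using C unfolding chains_def chain_subset_def by auto
      have "good T a b (\<Union>C)"
        unfolding good_def
      proof (intro conjI)
        show "\<forall>x\<in>\<Union>C. \<forall>y. x \<le> y \<longrightarrow> y \<in> \<Union>C" using sub unfolding good_def by blast
        show "\<forall>x\<in>\<Union>C. \<forall>y\<in>\<Union>C. inf x y \<in> \<Union>C"
        proof (intro ballI)
          fix x y assume "x \<in> \<Union>C" "y \<in> \<Union>C"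
          then obtain X Y where "X \<in> C" "Y \<in> C" "x \<in> X" "y \<in> Y" by blast
          moreover have gX: "good T a b X" "good T a b Y" using \<open>X \<in> C\<close> \<open>Y \<in> C\<close> sub by auto
          moreover have "X \<subseteq> Y \<or> Y \<subseteq> X" using ch \<open>X \<in> C\<close> \<open>Y \<in> C\<close> by blast
          ultimately have "inf x y \<in> X \<or> inf x y \<in> Y" unfolding good_def by blast
          then show "inf x y \<in> \<Union>C" using \<open>X \<in> C\<close> \<open>Y \<in> C\<close> by blast
        qed
        show "a \<in> \<Union>C" using sub False unfolding good_def by blast
        show "b \<notin> \<Union>C" using sub unfolding good_def by blast
        show "\<forall>c\<in>\<Union>C. \<forall>d. T c d \<longrightarrow> d \<in> \<Union>C" using sub unfolding good_def by blast
      qed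
      then show ?thesis by blast
    qed
  qed
  from Zorn_Lemma2[OF this] obtain M where M0: "M \<in> ?A" and max0: "\<forall>X\<in>?A. M \<subseteq> X \<longrightarrow> X = M"
    by (rule bexE)
  have M: "good T a b M" using M0 by simp
  have max: "\<And>X. good T a b X \<Longrightarrow> M \<subseteq> X \<Longrightarrow> X = M" using max0 by simp
  have up: "\<And>x y. x \<in> M \<Longrightarrow> x \<le> y \<Longrightarrow> y \<in> M" and mi: "\<And>x y. x \<in> M \<Longrightarrow> y \<in> M \<Longrightarrow> inf x y \<in> M"
    and aM: "a \<in> M" and bM: "b \<notin> M" and cl: "\<And>c d. c \<in> M \<Longrightarrow> T c d \<Longrightarrow> d \<in> M"
  proof -
    have G: "(\<forall>x\<in>M. \<forall>y. x \<le> y \<longrightarrow> y \<in> M) \<and> (\<forall>x\<in>M. \<forall>y\<in>M. inf x y \<in> M)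
     \<and> a \<in> M \<and> b \<notin> M \<and> (\<forall>c\<in>M. \<forall>d. T c d \<longrightarrow> d \<in> M)" using M unfolding good_def .
    show "\<And>x y. x \<in> M \<Longrightarrow> x \<le> y \<Longrightarrow> y \<in> M" using G by blast
    show "\<And>x y. x \<in> M \<Longrightarrow> y \<in> M \<Longrightarrow> inf x y \<in> M" using G by blast
    show "a \<in> M" using G by blast
    show "b \<notin> M" using G by blast
    show "\<And>c d. c \<in> M \<Longrightarrow> T c d \<Longrightarrow> d \<in> M" using G by blast
  qed
  have key: "\<exists>m\<in>M. T (inf m x) b" if xM: "x \<notin> M" for x
  proof (rule ccontr)
    assume nb: "\<not> (\<exists>m\<in>M. T (inf m x) b)"
    define F where "F = {e. \<exists>m\<in>M. T (inf m x) e}"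
    have gF: "good T a b F"
      unfolding good_def
    proof (intro conjI)
      show "\<forall>u\<in>F. \<forall>v. u \<le> v \<longrightarrow> v \<in> F" unfolding F_def using T2 by blast
      show "\<forall>u\<in>F. \<forall>v\<in>F. inf u v \<in> F"
      proof (intro ballI)
        fix u v assume "u \<in> F" "v \<in> F"
        then obtain m1 m2 where m: "m1 \<in> M" "m2 \<in> M" "T (inf m1 x) u" "T (inf m2 x) v"
          unfolding F_def by blast
        have "T (inf (inf m1 m2) x) u" using m(3) T4[of "inf (inf m1 m2) x" "inf m1 x"]
          by (meson inf_le1 inf_mono order_refl)
        moreover have "T (inf (inf m1 m2) x) v" using m(4) T4[of "inf (inf m1 m2) x" "inf m2 x"]
          by (meson inf_le2 inf_mono order_refl)
        ultimately show "inf u v \<in> F" unfolding F_def using mi m T3 by blast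
      qed
      show "a \<in> F" unfolding F_def using aM T2[OF T1[of "inf a x"] inf_le1] by blast
      show "b \<notin> F" unfolding F_def using nb by blast
      show "\<forall>c\<in>F. \<forall>d. T c d \<longrightarrow> d \<in> F" unfolding F_def using T5 by blast
    qed
    have "M \<subseteq> F" unfolding F_def using T2[OF T1 inf_le1] by blast
    then have "F = M" using max gF by blast
    moreover have "x \<in> F" unfolding F_def using aM T2[OF T1[of "inf a x"] inf_le2] by blast
    ultimately show False using xM by blast
  qed
  have prime: "x \<in> M \<or> y \<in> M" if "sup x y \<in> M" for x y
  proof (rule ccontr)
    assume "\<not> (x \<in> M \<or> y \<in> M)"
    then obtain m m' where mm: "m \<in> M" "m' \<in> M" "T (inf m x) b" "T (inf m' y) b"
      using key by blast
    let ?n = "inf m m'"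
    have "T (inf ?n x) b" using mm(3) T4[of "inf ?n x" "inf m x"] by (meson inf_le1 inf_mono order_refl)
    moreover have "T (inf ?n y) b" using mm(4) T4[of "inf ?n y" "inf m' y"] by (meson inf_le2 inf_mono order_refl)
    ultimately have "T (sup (inf ?n x) (inf ?n y)) b" by (rule T6)
    then have "T (inf ?n (sup x y)) b" by (simp add: inf_sup_distrib1)
    moreover have "inf ?n (sup x y) \<in> M" using mi mm that by blast
    ultimately show False using cl bM by blast
  qed
  have "prime_filter M"
    unfolding prime_filter_def
  proof (intro conjI allI impI)
    show "top \<in> M" using up[OF aM] by simp
    show "bot \<notin> M" using up[of bot b] bM by auto
  qed (use up mi prime in auto)
  then show ?thesis using aM bM cl by blast
qed

lemma pf_up: "prime_filter P \<Longrightarrow> x \<in> P \<Longrightarrow> x \<le> y \<Longrightarrow> y \<in> P"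
  unfolding prime_filter_def by blast

lemma pf_sup: "prime_filter P \<Longrightarrow> sup x y \<in> P \<longleftrightarrow> x \<in> P \<or> y \<in> P"
  unfolding prime_filter_def by (meson sup_ge1 sup_ge2)

lemma pf_inf: "prime_filter P \<Longrightarrow> inf x y \<in> P \<longleftrightarrow> x \<in> P \<and> y \<in> P"
  unfolding prime_filter_def by (meson inf_le1 inf_le2)

theorem theorem3p12:
  fixes imp :: "'a::{distrib_lattice,bounded_lattice} \<Rightarrow> 'a \<Rightarrow> 'a"
  assumes "wd_algebra imp"
  shows "inj (sigma :: 'a \<Rightarrow> 'a set set) \<and> hom_into_complex_algebra imp sigma"
proof -
  have A1: "\<And>a. imp a a = bot" and A2: "\<And>a b c. imp (sup a b) c = sup (imp a c) (imp b c)"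
    and A3: "\<And>a b c. imp a (inf b c) = sup (imp a b) (imp a c)"
    and A4: "\<And>a b c. imp a c \<le> sup (imp a b) (imp b c)"
    using assms unfolding wd_algebra_def by blast+
  have mono1: "imp c d \<le> imp c' d" if "c \<le> c'" for c c' d
  proof -
    have "imp c' d = sup (imp c d) (imp c' d)" using A2[of c c' d] that by (simp add: sup_absorb2)
    then show ?thesis by (metis sup.cobounded1)
  qed
  have anti2: "imp c d' \<le> imp c d" if "d \<le> d'" for c d d'
  proof -
    have "imp c d = sup (imp c d) (imp c d')" using A3[of c d d'] that by (simp add: inf_absorb1)
    then show ?thesis by (metis sup.cobounded2)
  qed
  have leT: "\<exists>Q. prime_filter Q \<and> a \<in> Q \<and> b \<notin> Q" if "\<not> a \<le> b" for a b :: 'a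
  proof -
    have "\<exists>Q. prime_filter Q \<and> a \<in> Q \<and> b \<notin> Q \<and> (\<forall>c\<in>Q. \<forall>d. c \<le> d \<longrightarrow> d \<in> Q)"
      by (rule sep[where T="(\<le>)"]) (use that in \<open>auto intro: order_trans le_supI le_infI\<close>)
    then show ?thesis by blast
  qed
  have inj: "inj (sigma :: 'a \<Rightarrow> 'a set set)"
  proof (rule injI)
    fix a b :: 'a assume eq: "sigma a = sigma b"
    show "a = b"
    proof (rule ccontr)
      assume "a \<noteq> b"
      then have "\<not> a \<le> b \<or> \<not> b \<le> a" by auto
      then show False
      proof
        assume "\<not> a \<le> b"
        then obtain Q where "prime_filter Q" "a \<in> Q" "b \<notin> Q" using leT by blast
        then show False using eq unfolding sigma_def prime_filters_def by blast
      next
        assume "\<not> b \<le> a"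
        then obtain Q where "prime_filter Q" "b \<in> Q" "a \<notin> Q" using leT by blast
        then show False using eq unfolding sigma_def prime_filters_def by blast
      qed
    qed
  qed
  have arrow: "sigma (imp a b) = larrow_S prime_filters (S_rel imp) (sigma a) (sigma b)" for a b
  proof
    show "sigma (imp a b) \<subseteq> larrow_S prime_filters (S_rel imp) (sigma a) (sigma b)"
    proof
      fix P assume "P \<in> sigma (imp a b)"
      then have P: "prime_filter P" "imp a b \<in> P" "P \<in> prime_filters"
        unfolding sigma_def prime_filters_def by auto
      have bP: "bot \<notin> P" using P unfolding prime_filter_def by blast
      have "\<exists>Q. prime_filter Q \<and> a \<in> Q \<and> b \<notin> Q \<and> (\<forall>c\<in>Q. \<forall>d. imp c d \<notin> P \<longrightarrow> d \<in> Q)"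
      proof (rule sep[where T="\<lambda>c d. imp c d \<notin> P"])
        show "\<And>c. imp c c \<notin> P" using A1 bP by simp
        show "\<And>c d d'. imp c d \<notin> P \<Longrightarrow> d \<le> d' \<Longrightarrow> imp c d' \<notin> P"
          using anti2 pf_up[OF P(1)] by blast
        show "\<And>c d1 d2. imp c d1 \<notin> P \<Longrightarrow> imp c d2 \<notin> P \<Longrightarrow> imp c (inf d1 d2) \<notin> P"
          using A3 pf_sup[OF P(1)] by simp
        show "\<And>c c' d. c' \<le> c \<Longrightarrow> imp c d \<notin> P \<Longrightarrow> imp c' d \<notin> P"
          using mono1 pf_up[OF P(1)] by blast
        show "\<And>c d e. imp c d \<notin> P \<Longrightarrow> imp d e \<notin> P \<Longrightarrow> imp c e \<notin> P"
          using A4 pf_up[OF P(1)] pf_sup[OF P(1)] by blast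
        show "\<And>c1 c2 d. imp c1 d \<notin> P \<Longrightarrow> imp c2 d \<notin> P \<Longrightarrow> imp (sup c1 c2) d \<notin> P"
          using A2 pf_sup[OF P(1)] by simp
        show "\<not> imp a b \<notin> P" using P by simp
      qed
      then obtain Q where Q: "prime_filter Q" "a \<in> Q" "b \<notin> Q" "\<forall>c\<in>Q. \<forall>d. imp c d \<notin> P \<longrightarrow> d \<in> Q"
        by blast
      have "(P, Q) \<in> S_rel imp" unfolding S_rel_def prime_filters_def using P Q by auto
      moreover have "Q \<in> sigma a - sigma b" unfolding sigma_def prime_filters_def using Q by auto
      ultimately show "P \<in> larrow_S prime_filters (S_rel imp) (sigma a) (sigma b)"
        unfolding larrow_S_def using P by blast
    qed
    show "larrow_S prime_filters (S_rel imp) (sigma a) (sigma b) \<subseteq> sigma (imp a b)"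
      unfolding larrow_S_def S_rel_def sigma_def by blast
  qed
  have "hom_into_complex_algebra imp sigma"
    unfolding hom_into_complex_algebra_def
  proof (intro conjI allI)
    show "sigma a \<in> upsets prime_filters (\<subseteq>)" for a :: 'a
      unfolding upsets_def sigma_def by blast
    show "sigma (inf a b) = sigma a \<inter> sigma b" for a b :: 'a
      unfolding sigma_def prime_filters_def using pf_inf by blast
    show "sigma (sup a b) = sigma a \<union> sigma b" for a b :: 'a
      unfolding sigma_def prime_filters_def using pf_sup by blast
    show "sigma (imp a b) = larrow_S prime_filters (S_rel imp) (sigma a) (sigma b)" for a b
      by (rule arrow)
    show "sigma bot = {}" unfolding sigma_def prime_filters_def prime_filter_def by blast
    show "sigma top = prime_filters" unfolding sigma_def prime_filters_def prime_filter_def by blast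
  qed
  with inj show ?thesis by blast
qed

end
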